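(* Let $\eta\in\mathcal D$ and let $\mathcal M_\eta:=\{x\in\mathbb U:\eta(x)=0\}$. Then \[\eta(x)=\tfrac12\,d_{\mathbb U}(x,\mathcal M_\eta)^2\qquad\text{for all }x\in\mathbb U,\] where $d_{\mathbb U}(x,\mathcal M_\eta):=\inf\{\mathrm{Length}(\alpha):\alpha:[0,1]\to\mathbb U\text{ absolutely continuous},\ \alpha(0)=x,\ \alpha(1)\in\mathcal M_\eta\}$.
   Context: Let $\zeta_{\min}>0$, $\beta\ge2$ an integer, and let $y_1,\dots,y_N\in\mathbb R^D$ be given points. $\mathbb U:=\bigcup_{i=1}^NB(y_i,\zeta_{\min}/2)$ (open Euclidean balls), $\overline{\mathbb U}$ its closure. For $x\in\partial\mathbb U$, $\vec n(x):=\{(x-y_i)/\|x-y_i\|:\|x-y_i\|=\zeta_{\min}/2\}$. $\mathcal D$ is the set of $\eta\in C^\beta(\overline{\mathbb U})$ such that $\|\nabla\eta(x)\|^2=2\eta(x)$ for all $x\in\mathbb U$, and there exists $\delta>0$ with $\langle\nabla\eta(x),n\rangle>\delta$ for all $x\in\partial\mathbb U$ and $n\in\vec n(x)$. *)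

theory Defs
  imports "HOL-Analysis.Analysis"
begin

definition UU :: "real \<Rightarrow> nat \<Rightarrow> (nat \<Rightarrow> 'a::euclidean_space) \<Rightarrow> 'a set" where
  "UU \<zeta> N y = (\<Union>i\<in>{1..N}. ball (y i) (\<zeta> / 2))"

definition nvec :: "real \<Rightarrow> nat \<Rightarrow> (nat \<Rightarrow> 'a::euclidean_space) \<Rightarrow> 'a \<Rightarrow> 'a set" where
  "nvec \<zeta> N y x = {(1 / norm (x - y i)) *\<^sub>R (x - y i) | i. i \<in> {1..N} \<and> norm (x - y i) = \<zeta> / 2}"

text \<open>C^k(closure U) for open U: f is k times differentiable in U and f together with all its
  partial derivatives of order at most k extend continuously to closure U.\<close>
fun Ck_closure :: "nat \<Rightarrow> 'a::euclidean_space set \<Rightarrow> ('a \<Rightarrow> real) \<Rightarrow> bool" where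
  "Ck_closure 0 U f \<longleftrightarrow> continuous_on (closure U) f"
| "Ck_closure (Suc k) U f \<longleftrightarrow> continuous_on (closure U) f \<and> (\<forall>x\<in>U. f differentiable (at x)) \<and>
     (\<forall>i\<in>Basis. \<exists>g. Ck_closure k U g \<and> (\<forall>x\<in>U. g x = frechet_derivative f (at x) i))"

definition grad :: "('a::euclidean_space \<Rightarrow> real) \<Rightarrow> 'a \<Rightarrow> 'a" where
  "grad f x = (\<Sum>i\<in>Basis. frechet_derivative f (at x) i *\<^sub>R i)"

text \<open>Gradient on the closure of U: value of the continuous extension of the gradient.\<close>
definition grad_cl :: "'a::euclidean_space set \<Rightarrow> ('a \<Rightarrow> real) \<Rightarrow> 'a \<Rightarrow> 'a" where
  "grad_cl U f x = (\<Sum>i\<in>Basis. Lim (at x within U) (\<lambda>z. frechet_derivative f (at z) i) *\<^sub>R i)"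

definition classD :: "real \<Rightarrow> nat \<Rightarrow> (nat \<Rightarrow> 'a::euclidean_space) \<Rightarrow> nat \<Rightarrow> ('a \<Rightarrow> real) set" where
  "classD \<zeta> N y \<beta> = {\<eta>. Ck_closure \<beta> (UU \<zeta> N y) \<eta> \<and>
     (\<forall>x\<in>UU \<zeta> N y. (norm (grad \<eta> x))\<^sup>2 = 2 * \<eta> x) \<and>
     (\<exists>\<delta>>0. \<forall>x\<in>frontier (UU \<zeta> N y). \<forall>n\<in>nvec \<zeta> N y x. grad_cl (UU \<zeta> N y) \<eta> x \<bullet> n > \<delta>)}"

definition abs_cont_on :: "real set \<Rightarrow> (real \<Rightarrow> 'a::real_normed_vector) \<Rightarrow> bool" where
  "abs_cont_on S \<alpha> \<longleftrightarrow> (\<forall>\<epsilon>>0. \<exists>\<delta>>0. \<forall>(n::nat) a b.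
      (\<forall>k<n. a k \<le> b k \<and> {a k..b k} \<subseteq> S) \<and>
      (\<forall>j<n. \<forall>k<n. j \<noteq> k \<longrightarrow> b j \<le> a k \<or> b k \<le> a j) \<and>
      (\<Sum>k<n. b k - a k) < \<delta> \<longrightarrow> (\<Sum>k<n. norm (\<alpha> (b k) - \<alpha> (a k))) < \<epsilon>)"

definition curve_length :: "(real \<Rightarrow> 'a::real_normed_vector) \<Rightarrow> ennreal" where
  "curve_length \<alpha> = (SUP p\<in>{(n, t). t 0 = 0 \<and> t n = 1 \<and> (\<forall>k<n. t k \<le> t (Suc k))}.
       ennreal (\<Sum>k<fst p. dist (\<alpha> (snd p (Suc k))) (\<alpha> (snd p k))))"

definition dist_U :: "'a::euclidean_space set \<Rightarrow> 'a \<Rightarrow> 'a set \<Rightarrow> ennreal" where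
  "dist_U U x M = (INF \<alpha>\<in>{\<alpha>. abs_cont_on {0..1} \<alpha> \<and> \<alpha> ` {0..1} \<subseteq> U \<and> \<alpha> 0 = x \<and> \<alpha> 1 \<in> M}.
       curve_length \<alpha>)"

end

theory Submission
  imports Defs
begin


locale setting =
  fixes r :: real and N :: nat and y :: "nat \<Rightarrow> 'a::euclidean_space"
    and U :: "'a set" and \<eta> :: "'a \<Rightarrow> real" and G :: "'a \<Rightarrow> 'a" and \<delta> :: real
  assumes r_pos: "r > 0"
    and U_def: "U = (\<Union>i\<in>{1..N}. ball (y i) r)"
    and eta_cont: "continuous_on (closure U) \<eta>"
    and eta_deriv: "\<And>z. z \<in> U \<Longrightarrow> (\<eta> has_derivative (\<lambda>v. G z \<bullet> v)) (at z)"
    and G_cont: "continuous_on (closure U) G"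
    and G_eq: "\<And>z. z \<in> U \<Longrightarrow> (norm (G z))\<^sup>2 = 2 * \<eta> z"
    and delta_pos: "\<delta> > 0"
    and bdry: "\<And>z i. z \<in> frontier U \<Longrightarrow> i \<in> {1..N} \<Longrightarrow> norm (z - y i) = r \<Longrightarrow> G z \<bullet> (z - y i) > \<delta> * r"
begin

lemma open_U: "open U" unfolding U_def by auto

lemma closure_U: "closure U = (\<Union>i\<in>{1..N}. cball (y i) r)"
proof
  show "closure U \<subseteq> (\<Union>i\<in>{1..N}. cball (y i) r)"
    by (rule closure_minimal) (auto simp: U_def closed_UN)
  show "(\<Union>i\<in>{1..N}. cball (y i) r) \<subseteq> closure U"
  proof (rule UN_least)
    fix i assume "i \<in> {1..N}"
    then have "ball (y i) r \<subseteq> U" by (auto simp: U_def)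
    then have "closure (ball (y i) r) \<subseteq> closure U" by (rule closure_mono)
    then show "cball (y i) r \<subseteq> closure U" using r_pos by simp
  qed
qed

lemma compact_K: "compact (closure U)"
  unfolding closure_U by (auto intro!: compact_UN)

lemma eta_eq_K: "z \<in> closure U \<Longrightarrow> (norm (G z))\<^sup>2 = 2 * \<eta> z"
proof -
  assume z: "z \<in> closure U"
  have c1: "continuous_on (closure U) (\<lambda>z. (norm (G z))\<^sup>2 - 2 * \<eta> z)"
    by (intro continuous_intros G_cont eta_cont)
  have "closed {w \<in> closure U. (norm (G w))\<^sup>2 - 2 * \<eta> w = 0}"
    using continuous_closed_preimage_constant[OF c1 closed_closure, of 0] by simp
  moreover have "U \<subseteq> {w \<in> closure U. (norm (G w))\<^sup>2 - 2 * \<eta> w = 0}"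
    using G_eq closure_subset by auto
  ultimately have "closure U \<subseteq> {w \<in> closure U. (norm (G w))\<^sup>2 - 2 * \<eta> w = 0}"
    by (rule closure_minimal[rotated])
  then show ?thesis using z by auto
qed

lemma eta_nonneg: "z \<in> closure U \<Longrightarrow> \<eta> z \<ge> 0"
  using eta_eq_K[of z] by (smt (verit) zero_le_power2)

lemma frontier_pt: "z \<in> closure U \<Longrightarrow> (\<forall>j\<in>{1..N}. norm (z - y j) \<ge> r) \<Longrightarrow> z \<in> frontier U"
  unfolding frontier_def interior_open[OF open_U] by (auto simp: U_def dist_norm norm_minus_commute)

lemma frontier_pos: "z \<in> frontier U \<Longrightarrow> \<eta> z > 0"
proof -
  assume z: "z \<in> frontier U"
  then have zK: "z \<in> closure U" by (simp add: frontier_def)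
  then obtain i where i: "i \<in> {1..N}" "norm (z - y i) \<le> r" unfolding closure_U by (auto simp: dist_norm norm_minus_commute)
  have "z \<notin> U" using z open_U by (simp add: frontier_def interior_open)
  then have "\<not> norm (z - y i) < r" using i unfolding U_def by (auto simp: dist_norm norm_minus_commute)
  then have "norm (z - y i) = r" using i by auto
  then have "G z \<bullet> (z - y i) > \<delta> * r" using bdry z i by auto
  then have "G z \<noteq> 0" using delta_pos r_pos by (smt (verit) inner_zero_left mult_pos_pos)
  then show ?thesis using eta_eq_K[OF zK] by (smt (verit) zero_less_norm_iff zero_less_power)
qed

lemma segment_mvt:
  assumes seg: "closed_segment a b \<subseteq> U"
  shows "\<exists>t. 0 < t \<and> t < 1 \<and> \<eta> b - \<eta> a = G (a + t *\<^sub>R (b - a)) \<bullet> (b - a)"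
proof -
  define \<phi> where "\<phi> t = \<eta> (a + t *\<^sub>R (b - a))" for t
  have img: "(\<lambda>t. a + t *\<^sub>R (b - a)) ` {0..1} \<subseteq> U"
  proof
    fix p assume "p \<in> (\<lambda>t. a + t *\<^sub>R (b - a)) ` {0..1}"
    then obtain t where t: "0 \<le> t" "t \<le> 1" "p = a + t *\<^sub>R (b - a)" by auto
    then have "p = (1 - t) *\<^sub>R a + t *\<^sub>R b" by (simp add: algebra_simps)
    then have "p \<in> closed_segment a b" using t by (auto simp: in_segment)
    then show "p \<in> U" using seg by auto
  qed
  have c: "continuous_on {0..1} \<phi>"
    unfolding \<phi>_def
    apply (rule continuous_on_compose2[OF eta_cont])
     apply (intro continuous_intros)
    using img closure_subset by blast
  have d: "(\<phi> has_real_derivative (G (a + t *\<^sub>R (b - a)) \<bullet> (b - a))) (at t)" if "0 < t" "t < 1" for t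
  proof -
    have "a + t *\<^sub>R (b - a) \<in> U" using img that by (auto simp: image_subset_iff)
    note e = eta_deriv[OF this]
    have l: "((\<lambda>t. a + t *\<^sub>R (b - a)) has_derivative (\<lambda>h. h *\<^sub>R (b - a))) (at t)"
      by (auto intro!: derivative_eq_intros)
    have "(\<phi> has_derivative (\<lambda>h. G (a + t *\<^sub>R (b - a)) \<bullet> (h *\<^sub>R (b - a)))) (at t)"
      unfolding \<phi>_def using has_derivative_compose[OF l e] by (simp add: o_def)
    then show ?thesis
      by (simp add: has_field_derivative_def mult.commute[of _ "G _ \<bullet> _"])
  qed
  obtain l t where "0 < t" "t < 1" "DERIV \<phi> t :> l" "\<phi> 1 - \<phi> 0 = (1 - 0) * l"
    using MVT[of 0 1 \<phi>] c d real_differentiable_def by force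
  moreover have "l = G (a + t *\<^sub>R (b - a)) \<bullet> (b - a)"
    using DERIV_unique d calculation by blast
  ultimately show ?thesis unfolding \<phi>_def by auto
qed

lemma seg_in:
  assumes seg: "closed_segment a b \<subseteq> U" and t: "0 \<le> t" "t \<le> 1"
  shows "a + t *\<^sub>R (b - a) \<in> U"
proof -
  have "a + t *\<^sub>R (b - a) = (1 - t) *\<^sub>R a + t *\<^sub>R b" by (simp add: algebra_simps)
  then have "a + t *\<^sub>R (b - a) \<in> closed_segment a b" using t by (auto simp: in_segment)
  then show ?thesis using seg by auto
qed

lemma seg_deriv:
  assumes seg: "closed_segment a b \<subseteq> U" and t: "0 \<le> t" "t \<le> 1"
  shows "((\<lambda>t. \<eta> (a + t *\<^sub>R (b - a))) has_real_derivative (G (a + t *\<^sub>R (b - a)) \<bullet> (b - a))) (at t)"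
proof -
  note e = eta_deriv[OF seg_in[OF assms]]
  have l: "((\<lambda>t. a + t *\<^sub>R (b - a)) has_derivative (\<lambda>h. h *\<^sub>R (b - a))) (at t)"
    by (auto intro!: derivative_eq_intros)
  have "((\<lambda>t. \<eta> (a + t *\<^sub>R (b - a))) has_derivative (\<lambda>h. G (a + t *\<^sub>R (b - a)) \<bullet> (h *\<^sub>R (b - a)))) (at t)"
    using has_derivative_compose[OF l e] by (simp add: o_def)
  then show ?thesis
    by (simp add: has_field_derivative_def mult.commute[of _ "G _ \<bullet> _"])
qed

lemma normG: "z \<in> U \<Longrightarrow> norm (G z) = sqrt (2 * \<eta> z)"
  using G_eq[of z] by (metis norm_ge_zero real_sqrt_unique)

lemma lip_seg:
  assumes seg: "closed_segment a b \<subseteq> U"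
  shows "norm (G b) \<le> norm (G a) + dist a b"
proof (rule field_le_epsilon)
  fix e :: real assume e: "e > 0"
  define \<phi> where "\<phi> t = \<eta> (a + t *\<^sub>R (b - a))" for t
  define \<psi> where "\<psi> t = sqrt (2 * \<phi> t + e\<^sup>2)" for t
  have inU: "a + t *\<^sub>R (b - a) \<in> U" if "0 \<le> t" "t \<le> 1" for t using seg_in[OF seg that] .
  have phi_nn: "\<phi> t \<ge> 0" if "0 \<le> t" "t \<le> 1" for t
    unfolding \<phi>_def using inU[OF that] eta_nonneg closure_subset by blast
  have dphi: "(\<phi> has_real_derivative (G (a + t *\<^sub>R (b - a)) \<bullet> (b - a))) (at t)" if "0 \<le> t" "t \<le> 1" for t
    unfolding \<phi>_def using seg_deriv[OF seg that] .
  have pos: "2 * \<phi> t + e\<^sup>2 > 0" if "0 \<le> t" "t \<le> 1" for t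
    using phi_nn[OF that] e by (smt (verit) zero_less_power2)
  have dpsi: "(\<psi> has_real_derivative (inverse (sqrt (2 * \<phi> t + e\<^sup>2)) / 2 * (2 * (G (a + t *\<^sub>R (b - a)) \<bullet> (b - a))))) (at t)"
    if "0 \<le> t" "t \<le> 1" for t
    unfolding \<psi>_def
    apply (rule DERIV_chain2[where g="\<lambda>t. 2 * \<phi> t + e\<^sup>2", OF DERIV_real_sqrt[OF pos[OF that]]])
    using dphi[OF that] by (auto intro!: derivative_eq_intros)
  have cpsi: "continuous_on {0..1} \<psi>"
    by (rule continuous_at_imp_continuous_on) (use dpsi DERIV_isCont in force)
  have diffs: "\<psi> differentiable (at x)" if "0 < x" "x < 1" for x
    using dpsi[of x] that unfolding real_differentiable_def by auto
  obtain l t where lt: "0 < t" "t < 1" "DERIV \<psi> t :> l" "\<psi> 1 - \<psi> 0 = (1 - 0) * l"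
    using MVT[OF zero_less_one cpsi diffs] by blast
  have l: "l = inverse (sqrt (2 * \<phi> t + e\<^sup>2)) / 2 * (2 * (G (a + t *\<^sub>R (b - a)) \<bullet> (b - a)))"
    by (rule DERIV_unique[OF lt(3) dpsi]) (use lt in auto)
  define p where "p = a + t *\<^sub>R (b - a)"
  have pU: "p \<in> U" unfolding p_def by (rule inU) (use lt in auto)
  have "G p \<bullet> (b - a) \<le> norm (G p) * norm (b - a)" by (rule norm_cauchy_schwarz)
  also have "norm (G p) = sqrt (2 * \<phi> t)" unfolding \<phi>_def p_def[symmetric] using normG[OF pU] .
  finally have X0: "G p \<bullet> (b - a) \<le> sqrt (2 * \<phi> t) * norm (b - a)" .
  have "sqrt (2 * \<phi> t) \<le> sqrt (2 * \<phi> t + e\<^sup>2)" by (rule real_sqrt_le_mono) simp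
  then have X: "G p \<bullet> (b - a) \<le> sqrt (2 * \<phi> t + e\<^sup>2) * norm (b - a)"
    using X0 by (meson mult_right_mono norm_ge_zero order_trans)
  have sp: "sqrt (2 * \<phi> t + e\<^sup>2) > 0" using pos[of t] lt(1,2) by simp
  have lform: "l = (G p \<bullet> (b - a)) / sqrt (2 * \<phi> t + e\<^sup>2)"
  proof -
    have gen: "\<And>S X::real. inverse S / 2 * (2 * X) = X / S" by (cases "S = 0") (auto simp: field_simps)
    show ?thesis unfolding l p_def by (rule gen)
  qed
  have "l \<le> (sqrt (2 * \<phi> t + e\<^sup>2) * norm (b - a)) / sqrt (2 * \<phi> t + e\<^sup>2)"
    unfolding lform by (rule divide_right_mono[OF X]) (use sp in auto)
  also have "\<dots> = norm (b - a)" using sp by simp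
  finally have "l \<le> norm (b - a)" .
  then have "\<psi> 1 \<le> \<psi> 0 + dist a b" using lt(4) by (simp add: dist_norm norm_minus_commute)
  moreover have "norm (G b) \<le> \<psi> 1"
  proof -
    have bU: "b \<in> U" using inU[of 1] by simp
    have "\<psi> 1 = sqrt (2 * \<eta> b + e\<^sup>2)" unfolding \<psi>_def \<phi>_def by simp
    then show ?thesis using normG[OF bU] by simp
  qed
  moreover have "\<psi> 0 \<le> norm (G a) + e"
  proof -
    have "\<psi> 0 \<le> sqrt (2 * \<phi> 0) + sqrt (e\<^sup>2)" unfolding \<psi>_def
      by (rule sqrt_add_le_add_sqrt) (use phi_nn[of 0] in auto)
    moreover have "a \<in> U" using inU[of 0] by simp
    moreover have "\<phi> 0 = \<eta> a" unfolding \<phi>_def by simp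
    ultimately show ?thesis using normG[of a] e by simp
  qed
  ultimately show "norm (G b) \<le> norm (G a) + dist a b + e" by linarith
qed

lemma ball_seg:
  assumes "ball c e \<subseteq> U" "a \<in> ball c e" "b \<in> ball c e"
  shows "closed_segment a b \<subseteq> U"
proof -
  have "closed_segment a b \<subseteq> ball c e"
    using assms(2,3) by (simp add: closed_segment_subset convex_ball)
  then show ?thesis using assms(1) by auto
qed

lemma curve_lower:
  assumes cont: "continuous_on {0..1} \<alpha>" and img: "\<alpha> ` {0..1} \<subseteq> U"
    and end1: "\<eta> (\<alpha> 1) = 0"
  shows "ennreal (norm (G (\<alpha> 0))) \<le> curve_length \<alpha>"
proof -
  have "compact (\<alpha> ` {0..1})" using compact_continuous_image[OF cont] by simp
  then obtain e where e: "e > 0" "(\<Union>x\<in>\<alpha> ` {0..1}. ball x e) \<subseteq> U"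
    using compact_subset_open_imp_ball_epsilon_subset[OF _ open_U img] by blast
  have "uniformly_continuous_on {0..1} \<alpha>"
    using compact_uniformly_continuous[OF cont] by simp
  then obtain d where d: "d > 0" "\<And>s t. s \<in> {0..1} \<Longrightarrow> t \<in> {0..1} \<Longrightarrow> dist s t < d \<Longrightarrow> dist (\<alpha> s) (\<alpha> t) < e"
    unfolding uniformly_continuous_on_def using e(1) by metis
  obtain n :: nat where n: "1 / d < real n" using reals_Archimedean2 by blast
  have npos: "n > 0" using n d(1) by (cases n) (auto simp: field_simps)
  have nd: "1 / real n < d" using n d(1) npos by (simp add: field_simps)
  define t where "t k = real k / real n" for k
  have t01: "t k \<in> {0..1}" if "k \<le> n" for k
    using that npos by (auto simp: t_def field_simps)
  have step: "norm (G (\<alpha> (t k))) - norm (G (\<alpha> (t (Suc k)))) \<le> dist (\<alpha> (t (Suc k))) (\<alpha> (t k))"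
    if "k < n" for k
  proof -
    have tk: "t k \<in> {0..1}" "t (Suc k) \<in> {0..1}" using t01 that by auto
    have "t (Suc k) - t k = 1 / real n" by (simp add: t_def diff_divide_distrib[symmetric])
    then have "dist (t (Suc k)) (t k) = 1 / real n" by (simp add: dist_real_def)
    then have "dist (\<alpha> (t (Suc k))) (\<alpha> (t k)) < e" using d(2)[OF tk(2,1)] nd by simp
    then have "\<alpha> (t (Suc k)) \<in> ball (\<alpha> (t k)) e" by (simp add: dist_commute)
    moreover have "\<alpha> (t k) \<in> ball (\<alpha> (t k)) e" using e(1) by simp
    moreover have "ball (\<alpha> (t k)) e \<subseteq> U" using e(2) tk(1) by blast
    ultimately have "closed_segment (\<alpha> (t (Suc k))) (\<alpha> (t k)) \<subseteq> U" using ball_seg by blast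
    from lip_seg[OF this] show ?thesis by simp
  qed
  have "(\<Sum>k<n. norm (G (\<alpha> (t k))) - norm (G (\<alpha> (t (Suc k))))) \<le> (\<Sum>k<n. dist (\<alpha> (t (Suc k))) (\<alpha> (t k)))"
    by (rule sum_mono) (use step in auto)
  moreover have "(\<Sum>k<n. norm (G (\<alpha> (t k))) - norm (G (\<alpha> (t (Suc k))))) = norm (G (\<alpha> (t 0))) - norm (G (\<alpha> (t n)))"
    by (rule sum_lessThan_telescope')
  moreover have "t 0 = 0" "t n = 1" using npos by (auto simp: t_def)
  moreover have "norm (G (\<alpha> 1)) = 0"
  proof -
    have "\<alpha> 1 \<in> U" using img by auto
    then show ?thesis using normG end1 by simp
  qed
  ultimately have le: "norm (G (\<alpha> 0)) \<le> (\<Sum>k<n. dist (\<alpha> (t (Suc k))) (\<alpha> (t k)))" by simp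
  have mem: "(n, t) \<in> {(n, t). t 0 = 0 \<and> t n = 1 \<and> (\<forall>k<n. t k \<le> t (Suc k))}"
    using npos by (auto simp: t_def divide_right_mono)
  have "ennreal (norm (G (\<alpha> 0))) \<le> ennreal (\<Sum>k<n. dist (\<alpha> (t (Suc k))) (\<alpha> (t k)))"
    using le by (rule ennreal_leI)
  also have "\<dots> \<le> curve_length \<alpha>"
    unfolding curve_length_def
    using SUP_upper[OF mem, of "\<lambda>p. ennreal (\<Sum>k<fst p. dist (\<alpha> (snd p (Suc k))) (\<alpha> (snd p k)))"] by simp
  finally show ?thesis .
qed

end



definition lipc :: "(real \<Rightarrow> 'a::real_normed_vector) \<Rightarrow> real \<Rightarrow> bool" where
  "lipc \<alpha> L \<longleftrightarrow> (\<forall>s\<in>{0..1}. \<forall>t\<in>{0..1}. dist (\<alpha> s) (\<alpha> t) \<le> L * \<bar>s - t\<bar>)"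

lemma lipc_mono: "lipc \<alpha> L \<Longrightarrow> L \<le> L' \<Longrightarrow> lipc \<alpha> L'"
proof -
  assume a: "lipc \<alpha> L" "L \<le> L'"
  show ?thesis unfolding lipc_def
  proof (intro ballI)
    fix s t :: real assume "s \<in> {0..1}" "t \<in> {0..1}"
    then have "dist (\<alpha> s) (\<alpha> t) \<le> L * \<bar>s - t\<bar>" using a(1) unfolding lipc_def by blast
    also have "\<dots> \<le> L' * \<bar>s - t\<bar>" by (rule mult_right_mono[OF a(2) abs_ge_zero])
    finally show "dist (\<alpha> s) (\<alpha> t) \<le> L' * \<bar>s - t\<bar>" .
  qed
qed

lemma lipc_nonneg: "lipc \<alpha> L \<Longrightarrow> dist (\<alpha> 0) (\<alpha> 1) \<le> L"
proof -
  assume a: "lipc \<alpha> L"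
  have "(0::real) \<in> {0..1}" "(1::real) \<in> {0..1}" by auto
  then have "dist (\<alpha> 0) (\<alpha> 1) \<le> L * \<bar>0 - 1\<bar>" using a unfolding lipc_def by blast
  then show ?thesis by simp
qed

lemma lipc_abs_cont:
  assumes "lipc \<alpha> L"
  shows "abs_cont_on {0..1} \<alpha>"
proof -
  have L0: "L \<ge> 0" using lipc_nonneg[OF assms] by (meson zero_le_dist order_trans)
  have main: "(\<Sum>k<n. norm (\<alpha> (b k) - \<alpha> (a k))) < \<epsilon>"
    if e: "\<epsilon> > 0" and H1: "\<forall>k<n. a k \<le> b k \<and> {a k..b k} \<subseteq> {0..1}"
      and H3: "(\<Sum>k<n. b k - a k) < \<epsilon> / (L + 1)" for \<epsilon> and n :: nat and a b :: "nat \<Rightarrow> real"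
  proof -
    have "(\<Sum>k<n. norm (\<alpha> (b k) - \<alpha> (a k))) \<le> (\<Sum>k<n. L * (b k - a k))"
    proof (rule sum_mono)
      fix k assume "k \<in> {..<n}"
      then have "a k \<le> b k" "a k \<in> {0..1}" "b k \<in> {0..1}" using H1 by auto
      then show "norm (\<alpha> (b k) - \<alpha> (a k)) \<le> L * (b k - a k)"
        using assms unfolding lipc_def dist_norm by (metis abs_of_nonneg diff_ge_0_iff_ge)
    qed
    also have "\<dots> = L * (\<Sum>k<n. b k - a k)" by (simp add: sum_distrib_left)
    also have "\<dots> \<le> L * (\<epsilon> / (L + 1))"
      using mult_left_mono[OF less_imp_le[OF H3] L0] .
    also have "\<dots> < \<epsilon>" using e L0 by (simp add: field_simps)
    finally show ?thesis .
  qed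
  show ?thesis
    unfolding abs_cont_on_def
    apply (intro allI impI)
    subgoal for \<epsilon>
      apply (rule exI[of _ "\<epsilon> / (L + 1)"])
      using main[of \<epsilon>] L0 by simp
    done
qed

lemma mono_steps:
  fixes t :: "nat \<Rightarrow> real" and n i j :: nat
  assumes "\<forall>k<n. (t::nat\<Rightarrow>real) k \<le> t (Suc k)" "i \<le> j" "j \<le> n"
  shows "t i \<le> t j"
  using assms(2,3)
proof (induction j)
  case 0 then show ?case by simp
next
  case (Suc j)
  show ?case
  proof (cases "i = Suc j")
    case True then show ?thesis by simp
  next
    case False
    then have "i \<le> j" "j < n" using Suc.prems by auto
    then have "t i \<le> t j" "t j \<le> t (Suc j)" using Suc.IH assms(1) by auto
    then show ?thesis by simp
  qed
qed

lemma lipc_length: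
  assumes "lipc \<alpha> L"
  shows "curve_length \<alpha> \<le> ennreal L"
  unfolding curve_length_def
proof (rule SUP_least)
  fix p :: "nat \<times> (nat \<Rightarrow> real)" assume "p \<in> {(n, t). t 0 = 0 \<and> t n = 1 \<and> (\<forall>k<n. t k \<le> t (Suc k))}"
  then obtain n and t :: "nat \<Rightarrow> real" where p: "p = (n, t)" "t 0 = 0" "t n = 1" "\<forall>k<n. t k \<le> t (Suc k)" by auto
  have t01: "t k \<in> {0..1}" if "k \<le> n" for k
    using mono_steps[OF p(4), of 0 k] mono_steps[OF p(4), of k n] that p(2,3) by auto
  have "(\<Sum>k<n. dist (\<alpha> (t (Suc k))) (\<alpha> (t k))) \<le> (\<Sum>k<n. L * (t (Suc k) - t k))"
  proof (rule sum_mono)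
    fix k assume k: "k \<in> {..<n}"
    then have "t k \<le> t (Suc k)" using p(4) by auto
    moreover have "t k \<in> {0..1}" "t (Suc k) \<in> {0..1}" using t01 k by auto
    ultimately show "dist (\<alpha> (t (Suc k))) (\<alpha> (t k)) \<le> L * (t (Suc k) - t k)"
      using assms unfolding lipc_def by (metis abs_of_nonneg diff_ge_0_iff_ge)
  qed
  also have "\<dots> = L * (t n - t 0)" by (simp add: sum_distrib_left[symmetric] sum_lessThan_telescope)
  also have "\<dots> = L" using p by simp
  finally show "ennreal (\<Sum>k<fst p. dist (\<alpha> (snd p (Suc k))) (\<alpha> (snd p k))) \<le> ennreal L"
    using p(1) by (simp add: ennreal_leI)
qed

lemma abs_cont_continuous:
  assumes "abs_cont_on {0..1} \<alpha>"
  shows "continuous_on {0..1} \<alpha>"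
  unfolding continuous_on_iff
proof (intro ballI allI impI)
  fix x e :: real assume x: "x \<in> {0..1}" and e: "e > 0"
  obtain d where dH: "d > 0 \<and> (\<forall>(n::nat) a b. (\<forall>k<n. a k \<le> b k \<and> {a k..b k} \<subseteq> {0..1}) \<and>
      (\<forall>j<n. \<forall>k<n. j \<noteq> k \<longrightarrow> b j \<le> a k \<or> b k \<le> a j) \<and>
      (\<Sum>k<n. b k - a k) < d \<longrightarrow> (\<Sum>k<n. norm (\<alpha> (b k) - \<alpha> (a k))) < e)"
    using assms[unfolded abs_cont_on_def, rule_format, OF e] ..
  note d = conjunct1[OF dH]
  note H = conjunct2[OF dH, rule_format]
  show "\<exists>d>0. \<forall>x'\<in>{0..1}. dist x' x < d \<longrightarrow> dist (\<alpha> x') (\<alpha> x) < e"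
  proof (intro exI[of _ d] conjI ballI impI)
    show "d > 0" by fact
    fix x' :: real assume x': "x' \<in> {0..1}" and dx: "dist x' x < d"
    define a where "a = (\<lambda>k::nat. min x x')"
    define b where "b = (\<lambda>k::nat. max x x')"
    have c1: "\<forall>k<(1::nat). a k \<le> b k \<and> {a k..b k} \<subseteq> {0..1}"
      using x x' by (auto simp: a_def b_def)
    have c2: "\<forall>j<(1::nat). \<forall>k<1. j \<noteq> k \<longrightarrow> b j \<le> a k \<or> b k \<le> a j" by auto
    have "max x x' - min x x' = \<bar>x' - x\<bar>" by (simp add: max_def min_def)
    then have c3: "(\<Sum>k<(1::nat). b k - a k) < d" using dx by (simp add: a_def b_def dist_real_def)
    have "(\<Sum>k<(1::nat). norm (\<alpha> (b k) - \<alpha> (a k))) < e"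
      by (rule H[of 1 a b, OF conjI[OF c1 conjI[OF c2 c3]]])
    then have "norm (\<alpha> (max x x') - \<alpha> (min x x')) < e" by (simp add: a_def b_def)
    moreover have "norm (\<alpha> (max x x') - \<alpha> (min x x')) = dist (\<alpha> x') (\<alpha> x)"
    proof (cases "x \<le> x'")
      case True then show ?thesis by (simp add: dist_norm)
    next
      case False then show ?thesis by (simp add: dist_norm norm_minus_commute)
    qed
    ultimately show "dist (\<alpha> x') (\<alpha> x) < e" by simp
  qed
qed


lemma lipc_glue:
  assumes p: "0 \<le> p" "p \<le> 1"
    and A: "\<And>s t. s \<in> {0..p} \<Longrightarrow> t \<in> {0..p} \<Longrightarrow> dist (\<beta> s) (\<beta> t) \<le> K * \<bar>s - t\<bar>"
    and B: "\<And>s t. s \<in> {p..1} \<Longrightarrow> t \<in> {p..1} \<Longrightarrow> dist (\<beta> s) (\<beta> t) \<le> K * \<bar>s - t\<bar>"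
  shows "lipc \<beta> K"
proof -
  have main: "dist (\<beta> s) (\<beta> t) \<le> K * \<bar>s - t\<bar>" if st: "s \<in> {0..1}" "t \<in> {0..1}" "s \<le> t" for s t
  proof (cases "t \<le> p")
    case True then show ?thesis using A[of s t] st by auto
  next
    case False
    show ?thesis
    proof (cases "s \<ge> p")
      case True then show ?thesis using B[of s t] st False by auto
    next
      case False2: False
      have "dist (\<beta> s) (\<beta> t) \<le> dist (\<beta> s) (\<beta> p) + dist (\<beta> p) (\<beta> t)" by (rule dist_triangle)
      also have "\<dots> \<le> K * \<bar>s - p\<bar> + K * \<bar>p - t\<bar>"
        using A[of s p] B[of p t] st p False False2 by (intro add_mono) auto
      also have "\<dots> = K * \<bar>s - t\<bar>" using False False2 st by (simp add: abs_if algebra_simps)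
      finally show ?thesis .
    qed
  qed
  show ?thesis unfolding lipc_def
  proof (intro ballI)
    fix s t :: real assume "s \<in> {0..1}" "t \<in> {0..1}"
    then show "dist (\<beta> s) (\<beta> t) \<le> K * \<bar>s - t\<bar>"
      using main[of s t] main[of t s] by (cases "s \<le> t") (auto simp: dist_commute abs_minus_commute)
  qed
qed

lemma seg_dist:
  fixes w w' :: "'a::real_normed_vector"
  shows "dist (w + c1 *\<^sub>R (w' - w)) (w + c2 *\<^sub>R (w' - w)) = \<bar>c1 - c2\<bar> * dist w w'"
proof -
  have "(w + c1 *\<^sub>R (w' - w)) - (w + c2 *\<^sub>R (w' - w)) = (c1 - c2) *\<^sub>R (w' - w)"
    by (simp add: algebra_simps)
  then show ?thesis by (simp add: dist_norm norm_minus_commute)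
qed

lemma seg_pt_in: "closed_segment w w' \<subseteq> U \<Longrightarrow> 0 \<le> c \<Longrightarrow> c \<le> 1 \<Longrightarrow> w + c *\<^sub>R (w' - w) \<in> U"
proof -
  assume a: "closed_segment w w' \<subseteq> U" "0 \<le> c" "c \<le> 1"
  have "w + c *\<^sub>R (w' - w) = (1 - c) *\<^sub>R w + c *\<^sub>R w'" by (simp add: algebra_simps)
  then have "w + c *\<^sub>R (w' - w) \<in> closed_segment w w'" using a by (auto simp: in_segment)
  then show ?thesis using a by auto
qed

lemma lipc_extend:
  assumes lip: "lipc \<alpha> L" and a0: "\<alpha> 0 = x" and a1: "\<alpha> 1 = w" and img: "\<alpha> ` {0..1} \<subseteq> U"
    and seg: "closed_segment w w' \<subseteq> U"
  shows "\<exists>\<beta>. lipc \<beta> (L + dist w w') \<and> \<beta> 0 = x \<and> \<beta> 1 = w' \<and> \<beta> ` {0..1} \<subseteq> U"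
proof -
  have L0: "L \<ge> 0" using lipc_nonneg[OF lip] by (meson zero_le_dist order_trans)
  show ?thesis
  proof (cases "w' = w")
    case True then show ?thesis using lip a0 a1 img by (intro exI[of _ \<alpha>]) simp
  next
    case wne: False
    define l where "l = dist w w'"
    have lpos: "l > 0" using wne by (simp add: l_def)
    show ?thesis
    proof (cases "L = 0")
      case True
      then have "x = w" using lipc_nonneg[OF lip] a0 a1 by simp
      define \<beta> where "\<beta> t = w + t *\<^sub>R (w' - w)" for t
      have "lipc \<beta> l" unfolding lipc_def
      proof (intro ballI)
        fix s t :: real
        show "dist (\<beta> s) (\<beta> t) \<le> l * \<bar>s - t\<bar>"
          unfolding \<beta>_def l_def seg_dist by (simp add: mult.commute)
      qed
      moreover have "\<beta> ` {0..1} \<subseteq> U" unfolding \<beta>_def using seg_pt_in[OF seg] by auto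
      ultimately show ?thesis using True \<open>x = w\<close> unfolding l_def
        by (intro exI[of _ \<beta>]) (simp add: \<beta>_def)
    next
      case False
      then have Lpos: "L > 0" using L0 by simp
      define K where "K = L + l"
      define p where "p = L / K"
      have Kpos: "K > 0" using Lpos lpos by (simp add: K_def)
      have p01: "0 < p" "p < 1" using Lpos lpos by (auto simp: p_def K_def field_simps)
      have Lp: "L / p = K" using Lpos Kpos by (simp add: p_def)
      have lp: "l / (1 - p) = K" using Lpos lpos Kpos by (simp add: p_def K_def field_simps)
      define \<beta> where "\<beta> t = (if t \<le> p then \<alpha> (t / p) else w + ((t - p) / (1 - p)) *\<^sub>R (w' - w))" for t
      have b2: "\<beta> t = w + ((t - p) / (1 - p)) *\<^sub>R (w' - w)" if "p \<le> t" for t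
      proof (cases "t = p")
        case True then show ?thesis using p01 a1 by (simp add: \<beta>_def)
      next
        case False then show ?thesis using that by (simp add: \<beta>_def)
      qed
      have A: "dist (\<beta> s) (\<beta> t) \<le> K * \<bar>s - t\<bar>" if "s \<in> {0..p}" "t \<in> {0..p}" for s t
      proof -
        have "s / p \<in> {0..1}" "t / p \<in> {0..1}" using that p01 by (auto simp: field_simps)
        then have "dist (\<alpha> (s / p)) (\<alpha> (t / p)) \<le> L * \<bar>s / p - t / p\<bar>" using lip unfolding lipc_def by blast
        also have "L * \<bar>s / p - t / p\<bar> = (L / p) * \<bar>s - t\<bar>" using p01
          by (simp add: diff_divide_distrib[symmetric] abs_divide)
        finally show ?thesis using that Lp by (simp add: \<beta>_def)
      qed
      have B: "dist (\<beta> s) (\<beta> t) \<le> K * \<bar>s - t\<bar>" if "s \<in> {p..1}" "t \<in> {p..1}" for s t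
      proof -
        have "dist (\<beta> s) (\<beta> t) = \<bar>(s - p) / (1 - p) - (t - p) / (1 - p)\<bar> * l"
        proof -
          have "\<beta> s = w + ((s - p) / (1 - p)) *\<^sub>R (w' - w)" "\<beta> t = w + ((t - p) / (1 - p)) *\<^sub>R (w' - w)"
            using that by (auto intro!: b2)
          then show ?thesis unfolding l_def by (simp only: seg_dist)
        qed
        also have "\<dots> = (l / (1 - p)) * \<bar>s - t\<bar>" using p01
          by (simp add: diff_divide_distrib[symmetric] abs_divide)
        finally show ?thesis using lp by simp
      qed
      have "lipc \<beta> K" by (rule lipc_glue[OF _ _ A B]) (use p01 in auto)
      moreover have "\<beta> ` {0..1} \<subseteq> U"
      proof
        fix z assume "z \<in> \<beta> ` {0..1}"
        then obtain t where t: "t \<in> {0..1}" "z = \<beta> t" by auto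
        show "z \<in> U"
        proof (cases "t \<le> p")
          case True
          then have "t / p \<in> {0..1}" using t p01 by (auto simp: field_simps)
          then show ?thesis using t True img by (auto simp: \<beta>_def)
        next
          case False
          then have "0 \<le> (t - p) / (1 - p)" "(t - p) / (1 - p) \<le> 1" using t p01 by (auto simp: field_simps)
          then show ?thesis using t False seg_pt_in[OF seg] by (auto simp: \<beta>_def)
        qed
      qed
      moreover have "\<beta> 0 = x" using a0 p01 by (simp add: \<beta>_def)
      moreover have "\<beta> 1 = w'" using b2[of 1] p01 by simp
      ultimately show ?thesis unfolding K_def l_def by blast
    qed
  qed
qed



context setting begin

lemma K_eq: "closure U = U \<union> frontier U"
  using open_U by (simp add: frontier_def interior_open closure_subset Un_absorb1 Un_Diff_cancel)

lemma G_bound: "\<exists>Gm>0. \<forall>z\<in>closure U. norm (G z) \<le> Gm"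
proof -
  have "compact (G ` closure U)" by (rule compact_continuous_image[OF G_cont compact_K])
  then obtain B where "B > 0" "\<forall>v\<in>G ` closure U. norm v \<le> B"
    using compact_imp_bounded bounded_pos by metis
  then show ?thesis by auto
qed

definition Y where "Y = y ` {1..N}"

lemma Y_fin: "finite Y" by (simp add: Y_def)

lemma closed_Y: "closed Y" using Y_fin by (simp add: finite_imp_closed)

lemma bdry_unif:
  "\<exists>\<rho>>0. \<forall>i\<in>{1..N}. \<forall>w\<in>closure U. norm (w - y i) \<le> r \<and> infdist w Y > r - \<rho> \<longrightarrow> G w \<bullet> (w - y i) > \<delta> * r / 2"
proof -
  define C where "C = (\<Union>i\<in>{1..N}. {w \<in> closure U. norm (w - y i) \<le> r \<and> G w \<bullet> (w - y i) \<le> \<delta> * r / 2})"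
  have compC: "compact C"
    unfolding C_def
  proof (intro compact_UN ballI finite_atLeastAtMost)
    fix i assume "i \<in> {1..N}"
    have c1: "continuous_on (closure U) (\<lambda>w. r - norm (w - y i))" by (intro continuous_intros)
    have c2: "continuous_on (closure U) (\<lambda>w. \<delta> * r / 2 - G w \<bullet> (w - y i))" by (intro continuous_intros G_cont)
    have "closed {w \<in> closure U. r - norm (w - y i) \<ge> 0}"
      using continuous_closed_preimage[OF c1 closed_closure closed_atLeast[of 0]] by (simp add: vimage_def Int_def)
    moreover have "closed {w \<in> closure U. \<delta> * r / 2 - G w \<bullet> (w - y i) \<ge> 0}"
      using continuous_closed_preimage[OF c2 closed_closure closed_atLeast[of 0]] by (simp add: vimage_def Int_def)
    ultimately have "closed ({w \<in> closure U. r - norm (w - y i) \<ge> 0} \<inter> {w \<in> closure U. \<delta> * r / 2 - G w \<bullet> (w - y i) \<ge> 0})"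
      by (rule closed_Int)
    moreover have "{w \<in> closure U. r - norm (w - y i) \<ge> 0} \<inter> {w \<in> closure U. \<delta> * r / 2 - G w \<bullet> (w - y i) \<ge> 0}
      = {w \<in> closure U. norm (w - y i) \<le> r \<and> G w \<bullet> (w - y i) \<le> \<delta> * r / 2}" by auto
    ultimately have "closed {w \<in> closure U. norm (w - y i) \<le> r \<and> G w \<bullet> (w - y i) \<le> \<delta> * r / 2}" by simp
    moreover have "bounded {w \<in> closure U. norm (w - y i) \<le> r \<and> G w \<bullet> (w - y i) \<le> \<delta> * r / 2}"
      by (rule bounded_subset[OF compact_imp_bounded[OF compact_K]]) auto
    ultimately show "compact {w \<in> closure U. norm (w - y i) \<le> r \<and> G w \<bullet> (w - y i) \<le> \<delta> * r / 2}"
      by (simp add: compact_eq_bounded_closed)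
  qed
  have inC: "infdist w Y < r" if "w \<in> C" for w
  proof -
    from that obtain i where i: "i \<in> {1..N}" "w \<in> closure U" "norm (w - y i) \<le> r" "G w \<bullet> (w - y i) \<le> \<delta> * r / 2"
      unfolding C_def by auto
    have "\<exists>j\<in>{1..N}. norm (w - y j) < r"
    proof (rule ccontr)
      assume "\<not> ?thesis"
      then have "\<forall>j\<in>{1..N}. norm (w - y j) \<ge> r" by auto
      then have rr: "\<forall>j\<in>{1..N}. norm (w - y j) \<ge> r" by auto
      then have "w \<in> frontier U" using frontier_pt[OF i(2)] by auto
      moreover have "norm (w - y i) \<ge> r" using rr i(1) by blast
      ultimately have "w \<in> frontier U" "norm (w - y i) = r" using i(3) by auto
      then have "G w \<bullet> (w - y i) > \<delta> * r" using bdry i(1) by auto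
      moreover have "\<delta> * r / 2 < \<delta> * r" using delta_pos r_pos by simp
      ultimately show False using i(4) by linarith
    qed
    then obtain j where "j \<in> {1..N}" "norm (w - y j) < r" by auto
    then have "infdist w Y \<le> dist w (y j)" unfolding Y_def by (intro infdist_le) auto
    then show ?thesis using \<open>norm (w - y j) < r\<close> by (simp add: dist_norm)
  qed
  show ?thesis
  proof (cases "C = {}")
    case True
    show ?thesis
    proof (intro exI[of _ r] conjI ballI impI)
      show "r > 0" by (rule r_pos)
      fix i w assume "i \<in> {1..N}" "w \<in> closure U" "norm (w - y i) \<le> r \<and> r - r < infdist w Y"
      then have "w \<notin> C" using True by auto
      then show "G w \<bullet> (w - y i) > \<delta> * r / 2" using \<open>i \<in> {1..N}\<close> \<open>w \<in> closure U\<close> \<open>norm (w - y i) \<le> r \<and> r - r < infdist w Y\<close>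
        unfolding C_def by force
    qed
  next
    case False
    have "continuous_on C (\<lambda>w. infdist w Y)" by (intro continuous_intros)
    then obtain w0 where w0: "w0 \<in> C" "\<forall>w\<in>C. infdist w Y \<le> infdist w0 Y"
      using continuous_attains_sup[OF compC False] by blast
    define \<rho> where "\<rho> = r - infdist w0 Y"
    have "\<rho> > 0" using inC[OF w0(1)] by (simp add: \<rho>_def)
    show ?thesis
    proof (intro exI[of _ \<rho>] conjI ballI impI)
      show "\<rho> > 0" by fact
      fix i w assume a: "i \<in> {1..N}" "w \<in> closure U" "norm (w - y i) \<le> r \<and> r - \<rho> < infdist w Y"
      then have "w \<notin> C" using w0(2) unfolding \<rho>_def by force
      then show "G w \<bullet> (w - y i) > \<delta> * r / 2" using a unfolding C_def by force
    qed
  qed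
qed

lemma near_M:
  assumes e: "e > 0"
  shows "\<exists>c>0. \<forall>w\<in>U. norm (G w) < c \<longrightarrow> (\<exists>m\<in>U. \<eta> m = 0 \<and> closed_segment w m \<subseteq> U \<and> dist w m < e)"
proof -
  define M' where "M' = {z \<in> closure U. \<eta> z = 0}"
  have closedM: "closed M'"
    unfolding M'_def using continuous_closed_preimage_constant[OF eta_cont closed_closure, of 0] by simp
  have compM: "compact M'"
    using closedM compact_K unfolding M'_def
    by (metis (no_types, lifting) compact_Int_closed inf_commute Collect_conj_eq Collect_mem_eq
        Int_absorb1 mem_Collect_eq subsetI Int_commute closed_Int_compact)
  have MU: "M' \<subseteq> U"
  proof
    fix z assume "z \<in> M'"
    then have z: "z \<in> closure U" "\<eta> z = 0" by (auto simp: M'_def)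
    show "z \<in> U"
    proof (rule ccontr)
      assume "z \<notin> U"
      then have "z \<in> frontier U" using z(1) K_eq by auto
      then show False using frontier_pos[of z] z(2) by simp
    qed
  qed
  obtain e0 where e0: "e0 > 0" "(\<Union>m\<in>M'. ball m e0) \<subseteq> U"
    using compact_subset_open_imp_ball_epsilon_subset[OF compM open_U MU] by blast
  define e1 where "e1 = min e e0"
  have e1: "e1 > 0" "e1 \<le> e" "e1 \<le> e0" using e e0 by (auto simp: e1_def)
  define C' where "C' = {w \<in> closure U. \<forall>m\<in>M'. dist w m \<ge> e1}"
  have closedC': "closed C'"
  proof -
    have "C' = closure U \<inter> (\<Inter>m\<in>M'. {w. dist w m \<ge> e1})" by (auto simp: C'_def)
    moreover have "closed (\<Inter>m\<in>M'. {w. dist w m \<ge> e1})"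
    proof (intro closed_INT ballI)
      fix m
      have "{w. dist w m \<ge> e1} = - ball m e1" by (auto simp: dist_commute)
      then show "closed {w. dist w m \<ge> e1}" by (simp add: closed_Compl)
    qed
    ultimately show ?thesis by (simp add: closed_Int)
  qed
  have compC': "compact C'"
  proof -
    have "bounded C'" by (rule bounded_subset[OF compact_imp_bounded[OF compact_K]]) (auto simp: C'_def)
    then show ?thesis using closedC' by (simp add: compact_eq_bounded_closed)
  qed
  have posC': "norm (G w) > 0" if "w \<in> C'" for w
  proof (rule ccontr)
    assume "\<not> norm (G w) > 0"
    then have "G w = 0" by simp
    moreover have wK: "w \<in> closure U" using that by (simp add: C'_def)
    ultimately have "\<eta> w = 0" using eta_eq_K[OF wK] by simp
    then have "w \<in> M'" using wK by (simp add: M'_def)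
    then have "dist w w \<ge> e1" using that by (auto simp: C'_def)
    then show False using e1 by simp
  qed
  obtain c where c: "c > 0" "\<forall>w\<in>C'. norm (G w) \<ge> c"
  proof (cases "C' = {}")
    case True then show ?thesis using that[of 1] by auto
  next
    case False
    have "continuous_on C' (\<lambda>w. norm (G w))"
      by (rule continuous_on_subset[OF continuous_on_norm[OF G_cont]]) (auto simp: C'_def)
    then obtain w0 where "w0 \<in> C'" "\<forall>w\<in>C'. norm (G w0) \<le> norm (G w)"
      using continuous_attains_inf[OF compC' False] by blast
    then show ?thesis using that[of "norm (G w0)"] posC' by auto
  qed
  show ?thesis
  proof (intro exI[of _ c] conjI ballI impI)
    show "c > 0" by fact
    fix w assume w: "w \<in> U" "norm (G w) < c"
    then have "w \<notin> C'" using c(2) by force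
    then obtain m where m: "m \<in> M'" "dist w m < e1" using w(1) closure_subset by (force simp: C'_def)
    have "ball m e0 \<subseteq> U" using e0(2) m(1) by blast
    moreover have "w \<in> ball m e0" using m(2) e1 by (simp add: dist_commute)
    moreover have "m \<in> ball m e0" using e0 by simp
    ultimately have "closed_segment w m \<subseteq> U" using ball_seg by blast
    moreover have "m \<in> U" "\<eta> m = 0" using m(1) MU by (auto simp: M'_def)
    ultimately show "\<exists>m\<in>U. \<eta> m = 0 \<and> closed_segment w m \<subseteq> U \<and> dist w m < e"
      using m(2) e1 by auto
  qed
qed

lemma norm_diff_sq: "(norm (a - b))\<^sup>2 = (norm a)\<^sup>2 - 2 * (a \<bullet> b) + (norm (b::'a))\<^sup>2"
  by (simp add: power2_norm_eq_inner inner_diff_left inner_diff_right inner_commute algebra_simps)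

lemma step_exists:
  assumes eps: "0 < \<epsilon>" "\<epsilon> < 1" and c: "c > 0"
  shows "\<exists>s>0. \<forall>w\<in>U. norm (G w) \<ge> c \<longrightarrow>
           (\<exists>w'. closed_segment w w' \<subseteq> U \<and> dist w w' = s \<and> norm (G w') \<le> norm (G w) - s * (1 - \<epsilon>))"
proof -
  obtain Gm where Gm: "Gm > 0" "\<forall>z\<in>closure U. norm (G z) \<le> Gm" using G_bound by blast
  obtain \<rho> where rho: "\<rho> > 0" "\<forall>i\<in>{1..N}. \<forall>w\<in>closure U. norm (w - y i) \<le> r \<and> infdist w Y > r - \<rho> \<longrightarrow> G w \<bullet> (w - y i) > \<delta> * r / 2"
    using bdry_unif by blast
  have "uniformly_continuous_on (closure U) G" by (rule compact_uniformly_continuous[OF G_cont compact_K])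
  moreover have ec: "\<epsilon> * c > 0" using eps c by simp
  ultimately obtain d where dd: "d > 0 \<and> (\<forall>a\<in>closure U. \<forall>b\<in>closure U. dist b a < d \<longrightarrow> dist (G b) (G a) < \<epsilon> * c)"
    unfolding uniformly_continuous_on_def by blast
  note d = conjunct1[OF dd] conjunct2[OF dd]
  define \<kappa> where "\<kappa> = \<delta> * r / 2 / Gm"
  have kpos: "\<kappa> > 0" using delta_pos r_pos Gm by (simp add: \<kappa>_def)
  define s where "s = min (min c (\<rho> / 2)) (min \<kappa> (d / 2))"
  have s: "s > 0" "s \<le> c" "s < \<rho>" "s \<le> \<kappa>" "s < d"
    using c rho(1) kpos d(1) by (auto simp: s_def)
  show ?thesis
  proof (intro exI[of _ s] conjI ballI impI)
    show "s > 0" by fact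
    fix w assume wU: "w \<in> U" and gc: "norm (G w) \<ge> c"
    have wK: "w \<in> closure U" using wU closure_subset by auto
    define g where "g = norm (G w)"
    have gpos: "g > 0" unfolding g_def using gc c by linarith
    define \<nu> where "\<nu> = (1 / g) *\<^sub>R G w"
    have nu1: "norm \<nu> = 1" using gpos by (simp add: \<nu>_def g_def)
    have nuG: "G w \<bullet> \<nu> = g" using gpos by (simp add: \<nu>_def g_def power2_norm_eq_inner[symmetric] power2_eq_square)
    define w' where "w' = w - s *\<^sub>R \<nu>"
    have dw: "dist w w' = s" using s(1) nu1 by (simp add: w'_def dist_norm)
    have segpt: "w - \<tau> *\<^sub>R \<nu> \<in> U" if tau: "0 \<le> \<tau>" "\<tau> \<le> s" for \<tau>
    proof (cases "infdist w Y \<le> r - \<rho>")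
      case True
      have "Y \<noteq> {}" using wU by (auto simp: Y_def U_def)
      then obtain q where q: "q \<in> Y" "infdist w Y = dist w q" using infdist_attains_inf[OF closed_Y] by blast
      then obtain j where j: "j \<in> {1..N}" "q = y j" by (auto simp: Y_def)
      have "dist (w - \<tau> *\<^sub>R \<nu>) (y j) \<le> dist (w - \<tau> *\<^sub>R \<nu>) w + dist w (y j)" by (rule dist_triangle)
      also have "dist (w - \<tau> *\<^sub>R \<nu>) w = \<tau>" using nu1 tau by (simp add: dist_norm)
      finally have "dist (w - \<tau> *\<^sub>R \<nu>) (y j) \<le> \<tau> + dist w (y j)" .
      moreover have "dist w (y j) = infdist w Y" using q j by simp
      ultimately have "dist (w - \<tau> *\<^sub>R \<nu>) (y j) < r" using True tau s by linarith
      then show ?thesis using j by (auto simp: U_def dist_commute)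
    next
      case False
      obtain i where i: "i \<in> {1..N}" "dist (y i) w < r" using wU by (auto simp: U_def)
      have ni: "norm (w - y i) \<le> r" using i(2) by (metis dist_commute dist_norm less_imp_le)
      have "G w \<bullet> (w - y i) > \<delta> * r / 2" using rho(2) i(1) wK ni False by auto
      moreover have "g \<le> Gm" using Gm(2) wK by (simp add: g_def)
      ultimately have "\<nu> \<bullet> (w - y i) \<ge> \<kappa>"
      proof -
        assume a: "G w \<bullet> (w - y i) > \<delta> * r / 2" "g \<le> Gm"
        have "\<nu> \<bullet> (w - y i) = (G w \<bullet> (w - y i)) / g" by (simp add: \<nu>_def)
        also have "\<dots> \<ge> (\<delta> * r / 2) / g" using divide_right_mono[OF less_imp_le[OF a(1)], of g] gpos by simp
        also have "(\<delta> * r / 2) / g \<ge> \<kappa>" unfolding \<kappa>_def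
          using a(2) gpos delta_pos r_pos by (simp add: frac_le)
        finally show ?thesis .
      qed
      then have nk: "\<nu> \<bullet> (w - y i) \<ge> \<kappa>" .
      have "(norm ((w - y i) - \<tau> *\<^sub>R \<nu>))\<^sup>2 = (norm (w - y i))\<^sup>2 - 2 * \<tau> * (\<nu> \<bullet> (w - y i)) + \<tau>\<^sup>2"
        using nu1 by (simp add: norm_diff_sq inner_commute power_mult_distrib)
      also have "\<dots> \<le> (norm (w - y i))\<^sup>2 - \<tau> * (2 * \<kappa> - \<tau>)"
      proof -
        have "\<tau> * \<kappa> \<le> \<tau> * (\<nu> \<bullet> (w - y i))" using nk tau by (simp add: mult_left_mono)
        then show ?thesis by (simp add: power2_eq_square algebra_simps)
      qed
      also have "\<dots> \<le> (norm (w - y i))\<^sup>2" using tau s kpos by (simp add: mult_nonneg_nonneg)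
      also have "\<dots> < r\<^sup>2"
      proof -
        have "norm (w - y i) < r" using i(2) by (metis dist_commute dist_norm)
        then show ?thesis by (rule power_strict_mono) auto
      qed
      finally have sq: "(norm ((w - y i) - \<tau> *\<^sub>R \<nu>))\<^sup>2 < r\<^sup>2" .
      have "norm ((w - y i) - \<tau> *\<^sub>R \<nu>) < r" using power2_less_imp_less[OF sq] r_pos by simp
      moreover have "(w - y i) - \<tau> *\<^sub>R \<nu> = (w - \<tau> *\<^sub>R \<nu>) - y i" by (simp add: algebra_simps)
      ultimately have "dist (y i) (w - \<tau> *\<^sub>R \<nu>) < r" by (metis dist_commute dist_norm)
      then show ?thesis using i(1) by (auto simp: U_def)
    qed
    have seg: "closed_segment w w' \<subseteq> U"
    proof
      fix z assume "z \<in> closed_segment w w'"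
      then obtain u where u: "0 \<le> u" "u \<le> 1" "z = (1 - u) *\<^sub>R w + u *\<^sub>R w'" by (auto simp: in_segment)
      then have "z = w - (u * s) *\<^sub>R \<nu>" by (simp add: w'_def algebra_simps)
      moreover have "0 \<le> u * s" using u s(1) by simp
      moreover have "u * s \<le> 1 * s" by (rule mult_right_mono) (use u s(1) in auto)
      ultimately show "z \<in> U" using segpt by simp
    qed
    obtain t where t: "0 < t" "t < 1" "\<eta> w' - \<eta> w = G (w + t *\<^sub>R (w' - w)) \<bullet> (w' - w)"
      using segment_mvt[OF seg] by blast
    define a where "a = w + t *\<^sub>R (w' - w)"
    have aU: "a \<in> U" unfolding a_def by (rule seg_in[OF seg]) (use t in auto)
    have "dist a w = t * s" using t nu1 s by (simp add: a_def w'_def dist_norm)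
    moreover have "t * s \<le> 1 * s" by (rule mult_right_mono) (use t s in auto)
    ultimately have "dist a w < d" using s by linarith
    moreover have aK: "a \<in> closure U" using aU closure_subset by auto
    ultimately have "dist (G a) (G w) < \<epsilon> * c" using d(2)[rule_format, OF wK aK] by blast
    moreover have "\<epsilon> * c \<le> \<epsilon> * g" by (rule mult_left_mono) (use gc eps in \<open>auto simp: g_def\<close>)
    ultimately have Gaw: "norm (G a - G w) \<le> \<epsilon> * g" by (simp add: dist_norm)
    have "G a \<bullet> \<nu> = G w \<bullet> \<nu> + (G a - G w) \<bullet> \<nu>" by (simp add: inner_diff_left)
    moreover have "(G a - G w) \<bullet> \<nu> \<ge> - norm (G a - G w)"
      using Cauchy_Schwarz_ineq2[of "G a - G w" \<nu>] nu1 by simp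
    ultimately have Gan: "G a \<bullet> \<nu> \<ge> g * (1 - \<epsilon>)" using nuG Gaw by (simp add: algebra_simps)
    have "\<eta> w' - \<eta> w = G a \<bullet> (w' - w)" using t(3) unfolding a_def .
    also have "w' - w = - (s *\<^sub>R \<nu>)" by (simp add: w'_def)
    also have "G a \<bullet> - (s *\<^sub>R \<nu>) = - s * (G a \<bullet> \<nu>)" by simp
    also have "\<dots> \<le> - s * (g * (1 - \<epsilon>))" using Gan s(1) by simp
    finally have etadec: "\<eta> w' \<le> \<eta> w - s * g * (1 - \<epsilon>)" by simp
    have w'U: "w' \<in> U" using seg by auto
    have "(norm (G w'))\<^sup>2 \<le> g\<^sup>2 - 2 * s * g * (1 - \<epsilon>)"
      using etadec G_eq[OF w'U] G_eq[OF wU] by (simp add: g_def)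
    also have "\<dots> \<le> (g - s * (1 - \<epsilon>))\<^sup>2"
    proof -
      have "(g - s * (1 - \<epsilon>))\<^sup>2 = g\<^sup>2 - 2 * s * g * (1 - \<epsilon>) + (s * (1 - \<epsilon>))\<^sup>2"
        by (simp add: power2_eq_square algebra_simps)
      moreover have "(s * (1 - \<epsilon>))\<^sup>2 \<ge> 0" by simp
      ultimately show ?thesis by linarith
    qed
    finally have "(norm (G w'))\<^sup>2 \<le> (g - s * (1 - \<epsilon>))\<^sup>2" .
    moreover have "g - s * (1 - \<epsilon>) \<ge> 0"
    proof -
      have "s * (1 - \<epsilon>) \<le> s * 1" by (rule mult_left_mono) (use eps s in auto)
      then show ?thesis using s gc unfolding g_def by linarith
    qed
    ultimately have "norm (G w') \<le> g - s * (1 - \<epsilon>)" by (rule power2_le_imp_le)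
    then show "\<exists>w'. closed_segment w w' \<subseteq> U \<and> dist w w' = s \<and> norm (G w') \<le> norm (G w) - s * (1 - \<epsilon>)"
      using seg dw by (auto simp: g_def)
  qed
qed

end



lemma arith_eps:
  fixes u e :: real
  assumes "u \<ge> 0" "e > 0"
  defines "\<epsilon> \<equiv> e / (2 * (2 * u + e + 1))"
  shows "0 < \<epsilon>" "\<epsilon> < 1" "u / (1 - \<epsilon>) + e / 2 \<le> u + e"
proof -
  have D: "2 * (2 * u + e + 1) > 0" using assms by simp
  show "0 < \<epsilon>" unfolding \<epsilon>_def using D assms by simp
  show e1: "\<epsilon> < 1" unfolding \<epsilon>_def using D assms by (simp add: divide_less_eq)
  have "\<epsilon> * (u + e / 2) \<le> e / 2"
  proof -
    have "\<epsilon> * (u + e / 2) = e * (2 * u + e) / (4 * (2 * u + e + 1))"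
      unfolding \<epsilon>_def using D by (simp add: field_simps)
    also have "\<dots> \<le> e * (2 * u + e + 1) / (4 * (2 * u + e + 1))"
      using assms D by (intro divide_right_mono mult_left_mono) auto
    also have "\<dots> = e / 4"
    proof -
      have X: "2 * u + e + 1 \<noteq> 0" using D by simp
      have gen: "\<And>X::real. X \<noteq> 0 \<Longrightarrow> e * X / (4 * X) = e / 4" by simp
      show ?thesis by (rule gen[OF X])
    qed
    finally have "\<epsilon> * (u + e / 2) \<le> e / 4" .
    then show ?thesis using assms(2) by linarith
  qed
  then have "u \<le> (u + e / 2) * (1 - \<epsilon>)" by (simp add: algebra_simps)
  then have "u / (1 - \<epsilon>) \<le> u + e / 2" using e1 by (simp add: divide_le_eq)
  then show "u / (1 - \<epsilon>) + e / 2 \<le> u + e" by simp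
qed

context setting begin

definition reach where
  "reach x w L \<longleftrightarrow> (\<exists>\<alpha>. lipc \<alpha> L \<and> \<alpha> 0 = x \<and> \<alpha> 1 = w \<and> \<alpha> ` {0..1} \<subseteq> U)"

lemma reach_refl: "x \<in> U \<Longrightarrow> reach x x 0"
  unfolding reach_def lipc_def by (intro exI[of _ "\<lambda>_. x"]) auto

lemma reach_ext: "reach x w L \<Longrightarrow> closed_segment w w' \<subseteq> U \<Longrightarrow> reach x w' (L + dist w w')"
  unfolding reach_def using lipc_extend by blast

lemma phase1:
  assumes xU: "x \<in> U" and eps: "0 < \<epsilon>" "\<epsilon> < 1" and c: "c > 0"
  shows "\<exists>w L. w \<in> U \<and> reach x w L \<and> norm (G w) < c \<and> L * (1 - \<epsilon>) \<le> norm (G x) - norm (G w)"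
proof -
  obtain s where s: "s > 0" and st: "\<And>w. w \<in> U \<Longrightarrow> norm (G w) \<ge> c \<Longrightarrow>
           (\<exists>w'. closed_segment w w' \<subseteq> U \<and> dist w w' = s \<and> norm (G w') \<le> norm (G w) - s * (1 - \<epsilon>))"
    using step_exists[OF eps c] by blast
  define P where "P k \<longleftrightarrow> (\<exists>w L. w \<in> U \<and> reach x w L \<and> L * (1 - \<epsilon>) \<le> norm (G x) - norm (G w) \<and>
      (norm (G w) < c \<or> L \<ge> real k * s))" for k :: nat
  have "P k" for k
  proof (induction k)
    case 0
    show ?case unfolding P_def using xU reach_refl[OF xU] s by (intro exI[of _ x] exI[of _ 0]) auto
  next
    case (Suc k)
    then obtain w L where wL: "w \<in> U" "reach x w L" "L * (1 - \<epsilon>) \<le> norm (G x) - norm (G w)"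
      "norm (G w) < c \<or> L \<ge> real k * s" unfolding P_def by blast
    show ?case
    proof (cases "norm (G w) < c")
      case True then show ?thesis unfolding P_def using wL by blast
    next
      case False
      then have Lk: "L \<ge> real k * s" using wL(4) by simp
      obtain w' where w': "closed_segment w w' \<subseteq> U" "dist w w' = s" "norm (G w') \<le> norm (G w) - s * (1 - \<epsilon>)"
        using st[OF wL(1)] False by force
      have "reach x w' (L + s)" using reach_ext[OF wL(2) w'(1)] w'(2) by simp
      moreover have "w' \<in> U" using w'(1) by auto
      moreover have "(L + s) * (1 - \<epsilon>) \<le> norm (G x) - norm (G w')"
        using wL(3) w'(3) by (simp add: algebra_simps)
      moreover have "L + s \<ge> real (Suc k) * s" using Lk by (simp add: algebra_simps)
      ultimately show ?thesis unfolding P_def by blast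
    qed
  qed
  obtain k :: nat where k: "norm (G x) / (s * (1 - \<epsilon>)) < real k" using reals_Archimedean2 by blast
  have spos: "s * (1 - \<epsilon>) > 0" using s eps by simp
  have "norm (G x) < real k * (s * (1 - \<epsilon>))" using k spos by (simp add: divide_less_eq)
  then have kk: "real k * s * (1 - \<epsilon>) > norm (G x)" by (simp add: mult.assoc)
  from \<open>P k\<close> obtain w L where wL: "w \<in> U" "reach x w L" "L * (1 - \<epsilon>) \<le> norm (G x) - norm (G w)"
      "norm (G w) < c \<or> L \<ge> real k * s" unfolding P_def by blast
  have "norm (G w) < c"
  proof (rule ccontr)
    assume "\<not> norm (G w) < c"
    then have "L \<ge> real k * s" using wL(4) by simp
    then have "L * (1 - \<epsilon>) \<ge> real k * s * (1 - \<epsilon>)" using eps by (simp add: mult_right_mono)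
    then show False using wL(3) kk norm_ge_zero[of "G w"] by linarith
  qed
  then show ?thesis using wL by blast
qed

lemma upper:
  assumes xU: "x \<in> U" and eps: "0 < \<epsilon>" "\<epsilon> < 1" and e: "e > 0"
  shows "\<exists>\<alpha>. lipc \<alpha> (norm (G x) / (1 - \<epsilon>) + e) \<and> \<alpha> 0 = x \<and> \<alpha> 1 \<in> U \<and> \<eta> (\<alpha> 1) = 0 \<and> \<alpha> ` {0..1} \<subseteq> U"
proof -
  obtain c where c: "c > 0" "\<forall>w\<in>U. norm (G w) < c \<longrightarrow> (\<exists>m\<in>U. \<eta> m = 0 \<and> closed_segment w m \<subseteq> U \<and> dist w m < e)"
    using near_M[OF e] by blast
  obtain w L where wL: "w \<in> U" "reach x w L" "norm (G w) < c" "L * (1 - \<epsilon>) \<le> norm (G x) - norm (G w)"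
    using phase1[OF xU eps c(1)] by blast
  obtain m where m: "m \<in> U" "\<eta> m = 0" "closed_segment w m \<subseteq> U" "dist w m < e"
    using c(2) wL(1,3) by blast
  have r: "reach x m (L + dist w m)" by (rule reach_ext[OF wL(2) m(3)])
  have "L * (1 - \<epsilon>) \<le> norm (G x)" using wL(4) norm_ge_zero[of "G w"] by linarith
  then have "L \<le> norm (G x) / (1 - \<epsilon>)" using eps by (simp add: le_divide_eq)
  then have "L + dist w m \<le> norm (G x) / (1 - \<epsilon>) + e" using m(4) by linarith
  moreover obtain \<alpha> where "lipc \<alpha> (L + dist w m)" "\<alpha> 0 = x" "\<alpha> 1 = m" "\<alpha> ` {0..1} \<subseteq> U"
    using r unfolding reach_def by blast
  ultimately show ?thesis using m(1,2) lipc_mono by blast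
qed

theorem main_loc:
  assumes xU: "x \<in> U"
  shows "dist_U U x {z \<in> U. \<eta> z = 0} = ennreal (norm (G x))"
proof (rule antisym)
  show "dist_U U x {z \<in> U. \<eta> z = 0} \<le> ennreal (norm (G x))"
  proof (rule ennreal_le_epsilon)
    fix e :: real assume e: "e > 0"
    define \<epsilon> where "\<epsilon> = e / (2 * (2 * norm (G x) + e + 1))"
    have eps: "0 < \<epsilon>" "\<epsilon> < 1" "norm (G x) / (1 - \<epsilon>) + e / 2 \<le> norm (G x) + e"
      using arith_eps[of "norm (G x)" e] e unfolding \<epsilon>_def by auto
    obtain \<alpha> where \<alpha>: "lipc \<alpha> (norm (G x) / (1 - \<epsilon>) + e / 2)" "\<alpha> 0 = x" "\<alpha> 1 \<in> U" "\<eta> (\<alpha> 1) = 0" "\<alpha> ` {0..1} \<subseteq> U"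
      using upper[OF xU eps(1,2), of "e / 2"] e by auto
    have "\<alpha> \<in> {\<alpha>. abs_cont_on {0..1} \<alpha> \<and> \<alpha> ` {0..1} \<subseteq> U \<and> \<alpha> 0 = x \<and> \<alpha> 1 \<in> {z \<in> U. \<eta> z = 0}}"
      using \<alpha> lipc_abs_cont[OF \<alpha>(1)] by auto
    then have "dist_U U x {z \<in> U. \<eta> z = 0} \<le> curve_length \<alpha>"
      unfolding dist_U_def by (rule INF_lower)
    also have "\<dots> \<le> ennreal (norm (G x) / (1 - \<epsilon>) + e / 2)" by (rule lipc_length[OF \<alpha>(1)])
    also have "\<dots> \<le> ennreal (norm (G x) + e)" using eps(3) by (rule ennreal_leI)
    also have "\<dots> = ennreal (norm (G x)) + ennreal e" using e by (simp add: ennreal_plus)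
    finally show "dist_U U x {z \<in> U. \<eta> z = 0} \<le> ennreal (norm (G x)) + ennreal e" .
  qed
  show "ennreal (norm (G x)) \<le> dist_U U x {z \<in> U. \<eta> z = 0}"
    unfolding dist_U_def
  proof (rule INF_greatest)
    fix \<alpha> assume "\<alpha> \<in> {\<alpha>. abs_cont_on {0..1} \<alpha> \<and> \<alpha> ` {0..1} \<subseteq> U \<and> \<alpha> 0 = x \<and> \<alpha> 1 \<in> {z \<in> U. \<eta> z = 0}}"
    then have a: "abs_cont_on {0..1} \<alpha>" "\<alpha> ` {0..1} \<subseteq> U" "\<alpha> 0 = x" "\<eta> (\<alpha> 1) = 0" by auto
    show "ennreal (norm (G x)) \<le> curve_length \<alpha>"
      using curve_lower[OF abs_cont_continuous[OF a(1)] a(2) a(4)] a(3) by simp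
  qed
qed


end

lemma lin_inner:
  fixes D :: "'a::euclidean_space \<Rightarrow> real"
  assumes "linear D"
  shows "D v = (\<Sum>i\<in>Basis. D i *\<^sub>R i) \<bullet> v"
proof -
  have "D v = D v \<bullet> 1" by simp
  also have "\<dots> = (\<Sum>i\<in>Basis. (v \<bullet> i) * (D i \<bullet> 1))" by (rule Linear_Algebra.linear_componentwise[OF assms])
  also have "\<dots> = (\<Sum>i\<in>Basis. D i * (i \<bullet> v))" by (simp add: inner_commute mult.commute)
  also have "\<dots> = (\<Sum>i\<in>Basis. D i *\<^sub>R i) \<bullet> v" by (simp add: inner_sum_left)
  finally show ?thesis .
qed

theorem theoremD4:
  fixes \<zeta> :: real and \<beta> N :: nat and y :: "nat \<Rightarrow> 'a::euclidean_space" and \<eta> :: "'a \<Rightarrow> real"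
  assumes "\<zeta> > 0" and "\<beta> \<ge> 2"
    and "\<eta> \<in> classD \<zeta> N y \<beta>"
    and "x \<in> UU \<zeta> N y"
  shows "dist_U (UU \<zeta> N y) x {z \<in> UU \<zeta> N y. \<eta> z = 0} < \<infinity> \<and>
         \<eta> x = (enn2real (dist_U (UU \<zeta> N y) x {z \<in> UU \<zeta> N y. \<eta> z = 0}))\<^sup>2 / 2"
proof -
  define U where "U = UU \<zeta> N y"
  define r where "r = \<zeta> / 2"
  have Udef: "U = (\<Union>i\<in>{1..N}. ball (y i) r)" by (simp add: U_def r_def UU_def)
  obtain k where k: "\<beta> = Suc (Suc k)" using assms(2) by (metis add_2_eq_Suc le_Suc_ex)
  have cD: "Ck_closure (Suc (Suc k)) U \<eta>" "\<forall>z\<in>U. (norm (grad \<eta> z))\<^sup>2 = 2 * \<eta> z"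
    "\<exists>\<delta>>0. \<forall>z\<in>frontier U. \<forall>n\<in>nvec \<zeta> N y z. grad_cl U \<eta> z \<bullet> n > \<delta>"
    using assms(3) unfolding classD_def U_def k by auto
  obtain \<delta> where \<delta>: "\<delta> > 0" "\<forall>z\<in>frontier U. \<forall>n\<in>nvec \<zeta> N y z. grad_cl U \<eta> z \<bullet> n > \<delta>"
    using cD(3) by blast
  have etac: "continuous_on (closure U) \<eta>" and diff: "\<forall>z\<in>U. \<eta> differentiable (at z)"
    and ex: "\<forall>i\<in>Basis. \<exists>g. Ck_closure (Suc k) U g \<and> (\<forall>z\<in>U. g z = frechet_derivative \<eta> (at z) i)"
    using cD(1) by auto
  have "\<forall>i\<in>Basis. \<exists>g. continuous_on (closure U) g \<and> (\<forall>z\<in>U. g z = frechet_derivative \<eta> (at z) i)"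
  proof
    fix i :: 'a assume "i \<in> Basis"
    then obtain g where "Ck_closure (Suc k) U g" "\<forall>z\<in>U. g z = frechet_derivative \<eta> (at z) i" using ex by blast
    then show "\<exists>g. continuous_on (closure U) g \<and> (\<forall>z\<in>U. g z = frechet_derivative \<eta> (at z) i)" by auto
  qed
  then obtain gf :: "'a \<Rightarrow> 'a \<Rightarrow> real" where gf: "\<And>i. i \<in> Basis \<Longrightarrow> continuous_on (closure U) (gf i)"
    "\<And>i z. i \<in> Basis \<Longrightarrow> z \<in> U \<Longrightarrow> gf i z = frechet_derivative \<eta> (at z) i"
    by metis
  define G where "G z = (\<Sum>i\<in>Basis. gf i z *\<^sub>R i)" for z
  have Gc: "continuous_on (closure U) G" unfolding G_def
    by (intro continuous_on_sum continuous_on_scaleR gf(1) continuous_on_const)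
  have Ggrad: "G z = grad \<eta> z" if "z \<in> U" for z
    unfolding G_def grad_def using gf(2) that by (intro sum.cong) auto
  have eta_deriv: "(\<eta> has_derivative (\<lambda>v. G z \<bullet> v)) (at z)" if z: "z \<in> U" for z
  proof -
    have d: "(\<eta> has_derivative frechet_derivative \<eta> (at z)) (at z)"
      using diff z frechet_derivative_works by blast
    have lin: "linear (frechet_derivative \<eta> (at z))"
      using diff z linear_frechet_derivative by blast
    have "frechet_derivative \<eta> (at z) = (\<lambda>v. G z \<bullet> v)"
    proof
      fix v
      show "frechet_derivative \<eta> (at z) v = G z \<bullet> v"
        using lin_inner[OF lin, of v] Ggrad[OF z] unfolding grad_def by simp
    qed
    then show ?thesis using d by simp
  qed
  have Geq: "(norm (G z))\<^sup>2 = 2 * \<eta> z" if "z \<in> U" for z using cD(2) Ggrad that by simp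
  have bd: "G z \<bullet> (z - y i) > \<delta> * r" if z: "z \<in> frontier U" and i: "i \<in> {1..N}" and nz: "norm (z - y i) = r" for z i
  proof -
    have rpos: "r > 0" using assms(1) by (simp add: r_def)
    have mem: "(1 / norm (z - y i)) *\<^sub>R (z - y i) \<in> nvec \<zeta> N y z"
      unfolding nvec_def using i nz by (auto simp: r_def)
    have gcl: "grad_cl U \<eta> z = G z"
    proof -
      have oU: "open U" using Udef by auto
      have zcl: "z \<in> closure U" and znU: "z \<notin> U"
        using z by (auto simp: frontier_def interior_open[OF oU])
      have lp: "z islimpt U" using zcl znU by (simp add: closure_def)
      have "Lim (at z within U) (\<lambda>w. frechet_derivative \<eta> (at w) j) = gf j z" if j: "j \<in> Basis" for j
      proof (rule tendsto_Lim)
        show "\<not> trivial_limit (at z within U)" using lp by (simp add: trivial_limit_within)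
        have "(gf j \<longlongrightarrow> gf j z) (at z within closure U)"
          using gf(1)[OF j] zcl by (simp add: continuous_on_def)
        then have "(gf j \<longlongrightarrow> gf j z) (at z within U)"
          by (rule tendsto_within_subset) (rule closure_subset)
        moreover have "\<forall>\<^sub>F w in at z within U. gf j w = frechet_derivative \<eta> (at w) j"
          using gf(2)[OF j] by (auto simp: eventually_at_filter)
        ultimately show "((\<lambda>w. frechet_derivative \<eta> (at w) j) \<longlongrightarrow> gf j z) (at z within U)"
          by (rule Lim_transform_eventually)
      qed
      then show ?thesis unfolding grad_cl_def G_def by (intro sum.cong) auto
    qed
    have "grad_cl U \<eta> z \<bullet> ((1 / norm (z - y i)) *\<^sub>R (z - y i)) > \<delta>" using \<delta>(2) z mem by blast
    then have "G z \<bullet> ((1 / norm (z - y i)) *\<^sub>R (z - y i)) > \<delta>" unfolding gcl .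
    then have "(1 / r) * (G z \<bullet> (z - y i)) > \<delta>" using nz by simp
    then show ?thesis using rpos by (simp add: field_simps)
  qed
  interpret S: setting r N y U \<eta> G \<delta>
  proof
    show "r > 0" using assms(1) by (simp add: r_def)
  qed (use Udef etac eta_deriv Gc Geq \<delta>(1) bd in auto)
  have xU: "x \<in> U" using assms(4) by (simp add: U_def)
  have main: "dist_U U x {z \<in> U. \<eta> z = 0} = ennreal (norm (G x))" by (rule S.main_loc[OF xU])
  show ?thesis
    unfolding U_def[symmetric] main
    using Geq[OF xU] by simp
qed

end
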